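(* Let $q\in(0,1)$ and let $W\in\{0,1\}^{I\times I}$ have zero diagonal and satisfy $W\mathbf{1}=W^*\mathbf{1}$; let $d_{\max}=\max_{j\in I}\sum_{i\in I}W_{ij}$. Consider the Broadcast Gossip Algorithm: at each time $t$, independently of the past, a node $j$ is drawn uniformly from $I$; then $x_i(t+1)=(1-q)x_i(t)+qx_j(t)$ for every $i$ with $W_{ij}=1$, and $x_i(t+1)=x_i(t)$ otherwise. Then for every $t\ge0$, $$\mathbb{E}[(\bar x(t)-\bar x(0))^2]\le\frac{q\,d_{\max}}{q\,d_{\max}+N(1-q)}V(x(0)).$$
   Context: $I$ is a finite set of $N$ nodes, $x(0)\in\mathbb{R}^I$ deterministic. $\mathbf{1}$ is the all-ones vector, $W^*$ the transpose. For $y\in\mathbb{R}^I$, $\bar y=\frac1N\sum_i y_i$ and $V(y)=\frac1N\sum_i(y_i-\bar y)^2$. *)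

theory Defs
  imports "HOL-Probability.Probability"
begin

text \<open>States are functions x :: 'a => real; only the values on the node set I matter.\<close>

definition avg :: "'a set \<Rightarrow> ('a \<Rightarrow> real) \<Rightarrow> real" where
  "avg I y = (\<Sum>i\<in>I. y i) / real (card I)"

definition Var :: "'a set \<Rightarrow> ('a \<Rightarrow> real) \<Rightarrow> real" where
  "Var I y = (\<Sum>i\<in>I. (y i - avg I y)^2) / real (card I)"

definition bga_step :: "'a set \<Rightarrow> ('a \<Rightarrow> 'a \<Rightarrow> real) \<Rightarrow> real \<Rightarrow> ('a \<Rightarrow> real) \<Rightarrow> 'a \<Rightarrow> ('a \<Rightarrow> real)" where
  "bga_step I W q x j = (\<lambda>i. if i \<in> I \<and> W i j = 1 then (1 - q) * x i + q * x j else x i)"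

fun bga_dist :: "'a set \<Rightarrow> ('a \<Rightarrow> 'a \<Rightarrow> real) \<Rightarrow> real \<Rightarrow> ('a \<Rightarrow> real) \<Rightarrow> nat \<Rightarrow> ('a \<Rightarrow> real) pmf" where
  "bga_dist I W q x0 0 = return_pmf x0"
| "bga_dist I W q x0 (Suc t) =
     bind_pmf (bga_dist I W q x0 t) (\<lambda>x. map_pmf (bga_step I W q x) (pmf_of_set I))"

end

theory Submission
  imports Defs
begin

lemma sq_dev:
  fixes z :: "'a \<Rightarrow> real"
  assumes "finite I" "I \<noteq> {}"
  shows "(\<Sum>i\<in>I. (z i - b)^2) = (\<Sum>i\<in>I. (z i - avg I z)^2) + real (card I) * (avg I z - b)^2"
proof -
  let ?m = "avg I z"
  have N: "real (card I) > 0" using assms by auto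
  have s0: "(\<Sum>i\<in>I. (z i - ?m)) = 0"
    using N by (simp add: sum_subtractf avg_def)
  have "(\<Sum>i\<in>I. (z i - b)^2) = (\<Sum>i\<in>I. (z i - ?m)^2 + 2*(?m - b)*(z i - ?m) + (?m - b)^2)"
    by (rule sum.cong) (auto simp: power2_eq_square algebra_simps)
  also have "\<dots> = (\<Sum>i\<in>I. (z i - ?m)^2) + 2*(?m - b)*(\<Sum>i\<in>I. (z i - ?m)) + real (card I) * (?m - b)^2"
    by (simp add: sum.distrib sum_distrib_left)
  finally show ?thesis using s0 by simp
qed

lemma balance_zero:
  fixes W :: "'a \<Rightarrow> 'a \<Rightarrow> real"
  assumes "finite I" "\<forall>i\<in>I. (\<Sum>j\<in>I. W i j) = (\<Sum>j\<in>I. W j i)"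
  shows "(\<Sum>j\<in>I. \<Sum>i\<in>I. W i j * (f j - f i)) = 0"
proof -
  have "(\<Sum>j\<in>I. \<Sum>i\<in>I. W i j * (f j - f i)) = (\<Sum>j\<in>I. (\<Sum>i\<in>I. W i j) * f j) - (\<Sum>j\<in>I. \<Sum>i\<in>I. W i j * f i)"
    by (simp add: right_diff_distrib sum_subtractf sum_distrib_right)
  also have "(\<Sum>j\<in>I. \<Sum>i\<in>I. W i j * f i) = (\<Sum>i\<in>I. \<Sum>j\<in>I. W i j * f i)"
    by (rule sum.swap)
  also have "\<dots> = (\<Sum>i\<in>I. (\<Sum>j\<in>I. W j i) * f i)"
    using assms(2) by (simp add: sum_distrib_right[symmetric])
  finally show ?thesis by simp
qed

lemma step_val:
  assumes "i \<in> I" "W i j \<in> {0,1}"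
  shows "bga_step I W q x j i = x i + q * W i j * (x j - x i)"
  using assms by (auto simp: bga_step_def algebra_simps)

lemma avg_step:
  assumes "finite I" "I \<noteq> {}" "\<forall>i\<in>I. W i j \<in> {0,1}"
  shows "avg I (bga_step I W q x j) = avg I x + q * (\<Sum>i\<in>I. W i j * (x j - x i)) / real (card I)"
proof -
  have "(\<Sum>i\<in>I. bga_step I W q x j i) = (\<Sum>i\<in>I. x i + q * (W i j * (x j - x i)))"
    using assms by (intro sum.cong) (auto simp: step_val)
  also have "\<dots> = (\<Sum>i\<in>I. x i) + q * (\<Sum>i\<in>I. W i j * (x j - x i))"
    by (simp add: sum.distrib sum_distrib_left)
  finally show ?thesis by (simp add: avg_def add_divide_distrib)
qed

lemma sumsq_step:
  assumes "\<forall>i\<in>I. W i j \<in> {0,1}"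
  shows "(\<Sum>i\<in>I. (bga_step I W q x j i - a)^2) = (\<Sum>i\<in>I. (x i - a)^2)
     + q * (\<Sum>i\<in>I. W i j * ((x j - a)^2 - (x i - a)^2)) - q * (1 - q) * (\<Sum>i\<in>I. W i j * (x j - x i)^2)"
proof -
  have "(\<Sum>i\<in>I. (bga_step I W q x j i - a)^2) = (\<Sum>i\<in>I. (x i - a)^2
     + q * (W i j * ((x j - a)^2 - (x i - a)^2)) - q * (1 - q) * (W i j * (x j - x i)^2))"
  proof (intro sum.cong refl)
    fix i assume i: "i \<in> I"
    then have "W i j = 0 \<or> W i j = 1" using assms by auto
    then show "(bga_step I W q x j i - a)^2 = (x i - a)^2
     + q * (W i j * ((x j - a)^2 - (x i - a)^2)) - q * (1 - q) * (W i j * (x j - x i)^2)"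
      using i by (auto simp: bga_step_def power2_eq_square algebra_simps)
  qed
  also have "\<dots> = (\<Sum>i\<in>I. (x i - a)^2)
     + q * (\<Sum>i\<in>I. W i j * ((x j - a)^2 - (x i - a)^2)) - q * (1 - q) * (\<Sum>i\<in>I. W i j * (x j - x i)^2)"
    by (simp add: sum.distrib sum_subtractf sum_distrib_left)
  finally show ?thesis .
qed

lemma w01: "w \<in> {0,1::real} \<Longrightarrow> w*(w*y) = w*y" by auto

lemma cs_step:
  fixes W :: "'a \<Rightarrow> 'a \<Rightarrow> real" and x :: "'a \<Rightarrow> real"
  assumes "\<forall>i\<in>I. W i j \<in> {0,1}"
  shows "(\<Sum>i\<in>I. W i j * (x j - x i))^2 \<le> (\<Sum>i\<in>I. W i j) * (\<Sum>i\<in>I. W i j * (x j - x i)^2)"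
proof -
  have "(\<Sum>i\<in>I. W i j * (x j - x i))^2 = (\<Sum>i\<in>I. W i j * (W i j * (x j - x i)))^2"
    proof (intro arg_cong[where f="\<lambda>t. t^2"] sum.cong refl)
    fix i assume "i \<in> I"
    then show "W i j * (x j - x i) = W i j * (W i j * (x j - x i))"
      using assms w01[of "W i j" "x j - x i"] by simp
  qed
  also have "\<dots> \<le> (\<Sum>i\<in>I. (W i j)^2) * (\<Sum>i\<in>I. (W i j * (x j - x i))^2)"
    by (rule Cauchy_Schwarz_ineq_sum)
  also have "(\<Sum>i\<in>I. (W i j)^2) = (\<Sum>i\<in>I. W i j)"
    using assms by (intro sum.cong) (auto simp: power2_eq_square)
  also have "(\<Sum>i\<in>I. (W i j * (x j - x i))^2) = (\<Sum>i\<in>I. W i j * (x j - x i)^2)"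
    using assms by (intro sum.cong) (auto simp: power2_eq_square)
  finally show ?thesis .
qed

lemma phi_step:
  fixes W :: "'a \<Rightarrow> 'a \<Rightarrow> real" and x :: "'a \<Rightarrow> real"
  assumes fin: "finite I" and ne: "I \<noteq> {}" and q: "0 < q" "q < 1"
    and W01: "\<forall>i\<in>I. W i j \<in> {0,1}"
    and Dm: "(\<Sum>i\<in>I. W i j) \<le> Dm"
    and al: "al * (q * Dm + real (card I) * (1 - q)) = q * Dm" "0 \<le> al" "al \<le> 1"
  shows "(avg I (bga_step I W q x j) - c)^2 + al * Var I (bga_step I W q x j)
     \<le> (avg I x - c)^2 + al * Var I x
       + 2 * (avg I x - c) * q * (\<Sum>i\<in>I. W i j * (x j - x i)) / real (card I)
       + al * q * (\<Sum>i\<in>I. W i j * ((x j - avg I x)^2 - (x i - avg I x)^2)) / real (card I)"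
proof -
  define N where "N = real (card I)"
  define a where "a = avg I x"
  define s where "s = (\<Sum>i\<in>I. W i j * (x j - x i))"
  define R where "R = (\<Sum>i\<in>I. W i j * ((x j - a)^2 - (x i - a)^2))"
  define Q where "Q = (\<Sum>i\<in>I. W i j * (x j - x i)^2)"
  define Sy where "Sy = (\<Sum>i\<in>I. (x i - a)^2)"
  define x' where "x' = bga_step I W q x j"
  have N: "N > 0" using fin ne by (simp add: N_def card_gt_0_iff)
  have avg': "avg I x' = a + q * s / N"
    unfolding x'_def a_def s_def N_def using avg_step[of I W j q x] fin ne W01 by simp
  have ss: "(\<Sum>i\<in>I. (x' i - a)^2) = Sy + q * R - q * (1 - q) * Q"
    unfolding x'_def Sy_def R_def Q_def using sumsq_step[of I W j q x a] W01 by simp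
  have "(\<Sum>i\<in>I. (x' i - a)^2) = (\<Sum>i\<in>I. (x' i - avg I x')^2) + N * (avg I x' - a)^2"
    unfolding N_def by (rule sq_dev[OF fin ne])
  then have ss2: "(\<Sum>i\<in>I. (x' i - avg I x')^2) = Sy + q * R - q * (1 - q) * Q - N * (q * s / N)^2"
    using ss avg' by simp
  have V': "Var I x' = (Sy + q * R - q * (1 - q) * Q - N * (q * s / N)^2) / N"
    unfolding Var_def using ss2 N_def by simp
  have V: "Var I x = Sy / N" unfolding Var_def Sy_def a_def N_def by simp
  have Q0: "Q \<ge> 0" unfolding Q_def using W01 by (intro sum_nonneg) auto
  have cs: "s^2 \<le> (\<Sum>i\<in>I. W i j) * Q" unfolding s_def Q_def using cs_step[of I W j x] W01 by simp
  also have "\<dots> \<le> Dm * Q" using Dm Q0 by (rule mult_right_mono)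
  finally have cs2: "s^2 \<le> Dm * Q" .
  have key: "(1 - al) * q^2 * s^2 \<le> al * q * (1 - q) * Q * N"
  proof -
    have "(1 - al) * q^2 * s^2 \<le> (1 - al) * q^2 * (Dm * Q)"
      using cs2 al q by (intro mult_left_mono) auto
    also have "\<dots> = q * Q * (q * Dm - al * (q * Dm))" by (simp add: algebra_simps power2_eq_square)
    also have "q * Dm - al * (q * Dm) = al * N * (1 - q)"
      using al(1) unfolding N_def by (simp add: algebra_simps)
    finally show ?thesis by (simp add: algebra_simps)
  qed
  have "(avg I x' - c)^2 + al * Var I x' =
        (a - c)^2 + al * Sy / N + 2 * (a - c) * q * s / N + al * q * R / N
        + ((1 - al) * q^2 * s^2 - al * q * (1 - q) * Q * N) / N^2"
    using N unfolding avg' V' by (simp add: field_simps power2_eq_square)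
  also have "\<dots> \<le> (a - c)^2 + al * Sy / N + 2 * (a - c) * q * s / N + al * q * R / N"
    using key N by (simp add: divide_nonpos_pos)
  finally show ?thesis unfolding x'_def V a_def s_def R_def N_def by simp
qed

lemma one_step:
  fixes W :: "'a \<Rightarrow> 'a \<Rightarrow> real" and x :: "'a \<Rightarrow> real"
  assumes fin: "finite I" and ne: "I \<noteq> {}" and q: "0 < q" "q < 1"
    and W01: "\<forall>i\<in>I. \<forall>j\<in>I. W i j \<in> {0,1}"
    and bal: "\<forall>i\<in>I. (\<Sum>j\<in>I. W i j) = (\<Sum>j\<in>I. W j i)"
    and Dm: "\<forall>j\<in>I. (\<Sum>i\<in>I. W i j) \<le> Dm"
    and al: "al * (q * Dm + real (card I) * (1 - q)) = q * Dm" "0 \<le> al" "al \<le> 1"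
  shows "measure_pmf.expectation (map_pmf (bga_step I W q x) (pmf_of_set I))
           (\<lambda>y. (avg I y - c)^2 + al * Var I y) \<le> (avg I x - c)^2 + al * Var I x"
proof -
  define N where "N = real (card I)"
  define a where "a = avg I x"
  define P where "P = (avg I x - c)^2 + al * Var I x"
  have N: "N > 0" using fin ne by (simp add: N_def card_gt_0_iff)
  have "(\<Sum>j\<in>I. (avg I (bga_step I W q x j) - c)^2 + al * Var I (bga_step I W q x j))
     \<le> (\<Sum>j\<in>I. P + (2 * (a - c) * q / N) * (\<Sum>i\<in>I. W i j * (x j - x i))
          + (al * q / N) * (\<Sum>i\<in>I. W i j * ((\<lambda>k. (x k - a)^2) j - (\<lambda>k. (x k - a)^2) i)))"
  proof (rule sum_mono)
    fix j assume j: "j \<in> I"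
    have "(avg I (bga_step I W q x j) - c)^2 + al * Var I (bga_step I W q x j)
     \<le> (avg I x - c)^2 + al * Var I x
       + 2 * (avg I x - c) * q * (\<Sum>i\<in>I. W i j * (x j - x i)) / real (card I)
       + al * q * (\<Sum>i\<in>I. W i j * ((x j - avg I x)^2 - (x i - avg I x)^2)) / real (card I)"
      using phi_step[OF fin ne q, of W j Dm al x c] W01 j Dm al by auto
    then show "(avg I (bga_step I W q x j) - c)^2 + al * Var I (bga_step I W q x j)
     \<le> P + (2 * (a - c) * q / N) * (\<Sum>i\<in>I. W i j * (x j - x i))
          + (al * q / N) * (\<Sum>i\<in>I. W i j * ((\<lambda>k. (x k - a)^2) j - (\<lambda>k. (x k - a)^2) i))"
      unfolding P_def a_def N_def by simp
  qed
  also have "\<dots> = N * P + (2 * (a - c) * q / N) * (\<Sum>j\<in>I. \<Sum>i\<in>I. W i j * (x j - x i))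
          + (al * q / N) * (\<Sum>j\<in>I. \<Sum>i\<in>I. W i j * ((\<lambda>k. (x k - a)^2) j - (\<lambda>k. (x k - a)^2) i))"
    unfolding N_def by (simp add: sum.distrib sum_distrib_left)
  also have "\<dots> = N * P"
    using balance_zero[OF fin bal, of x] balance_zero[OF fin bal, of "\<lambda>k. (x k - a)^2"] by simp
  finally have S: "(\<Sum>j\<in>I. (avg I (bga_step I W q x j) - c)^2 + al * Var I (bga_step I W q x j)) \<le> N * P" .
  have "measure_pmf.expectation (map_pmf (bga_step I W q x) (pmf_of_set I))
           (\<lambda>y. (avg I y - c)^2 + al * Var I y)
      = (\<Sum>j\<in>I. (avg I (bga_step I W q x j) - c)^2 + al * Var I (bga_step I W q x j)) / N"
    using fin ne by (simp add: integral_pmf_of_set N_def)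
  also have "\<dots> \<le> N * P / N" using S N by (intro divide_right_mono) auto
  also have "\<dots> = P" using N by simp
  finally show ?thesis unfolding P_def .
qed

theorem mainTheorem11:
  fixes I :: "'a set" and W :: "'a \<Rightarrow> 'a \<Rightarrow> real" and q :: real and x0 :: "'a \<Rightarrow> real" and t :: nat
  assumes "finite I" and "I \<noteq> {}"
    and "0 < q" and "q < 1"
    and "\<forall>i\<in>I. \<forall>j\<in>I. W i j \<in> {0, 1}"
    and "\<forall>i\<in>I. W i i = 0"
    and "\<forall>i\<in>I. (\<Sum>j\<in>I. W i j) = (\<Sum>j\<in>I. W j i)"
  shows "measure_pmf.expectation (bga_dist I W q x0 t) (\<lambda>x. (avg I x - avg I x0)^2)
    \<le> q * Max ((\<lambda>j. \<Sum>i\<in>I. W i j) ` I)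
        / (q * Max ((\<lambda>j. \<Sum>i\<in>I. W i j) ` I) + real (card I) * (1 - q)) * Var I x0"
proof -
  note fin = assms(1) and ne = assms(2) and q = assms(3,4) and W01 = assms(5) and bal = assms(7)
  define Dm where "Dm = Max ((\<lambda>j. \<Sum>i\<in>I. W i j) ` I)"
  define N where "N = real (card I)"
  define al where "al = q * Dm / (q * Dm + N * (1 - q))"
  define c where "c = avg I x0"
  define \<Phi> where "\<Phi> = (\<lambda>y. (avg I y - c)^2 + al * Var I y)"
  have N: "N > 0" using fin ne by (simp add: N_def card_gt_0_iff)
  have DmI: "\<forall>j\<in>I. (\<Sum>i\<in>I. W i j) \<le> Dm" unfolding Dm_def using fin by auto
  obtain j0 where j0: "j0 \<in> I" using ne by auto
  have "0 \<le> (\<Sum>i\<in>I. W i j0)"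
  proof (intro sum_nonneg)
    fix i assume "i \<in> I" then have "W i j0 \<in> {0,1}" using W01 j0 by blast
    then show "0 \<le> W i j0" by auto
  qed
  then have Dm0: "0 \<le> Dm" using DmI j0 by fastforce
  have den: "q * Dm + N * (1 - q) > 0" using Dm0 q N by (simp add: add_nonneg_pos)
  have al1: "al * (q * Dm + real (card I) * (1 - q)) = q * Dm"
    using den unfolding al_def N_def by simp
  have al0: "0 \<le> al" unfolding al_def using den Dm0 q by simp
  have al2: "al \<le> 1" unfolding al_def using den Dm0 q N by simp
  have step: "\<And>x. measure_pmf.expectation (map_pmf (bga_step I W q x) (pmf_of_set I)) \<Phi> \<le> \<Phi> x"
    unfolding \<Phi>_def using one_step[OF fin ne q W01 bal DmI al1 al0 al2] .
  have IH: "finite (set_pmf (bga_dist I W q x0 t)) \<and> measure_pmf.expectation (bga_dist I W q x0 t) \<Phi> \<le> \<Phi> x0"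
  proof (induction t)
    case 0
    then show ?case by simp
  next
    case (Suc t)
    define p where "p = bga_dist I W q x0 t"
    define f where "f = (\<lambda>x. map_pmf (bga_step I W q x) (pmf_of_set I))"
    have finp: "finite (set_pmf p)" using Suc p_def by simp
    have finf: "\<And>x. finite (set_pmf (f x))" unfolding f_def using fin ne by simp
    have eq: "bga_dist I W q x0 (Suc t) = p \<bind> f" unfolding p_def f_def by simp
    have finb: "finite (set_pmf (p \<bind> f))" using finp finf by simp
    have "measure_pmf.expectation (p \<bind> f) \<Phi> = (\<Sum>a\<in>set_pmf p. pmf p a *\<^sub>R measure_pmf.expectation (f a) \<Phi>)"
      by (rule pmf_expectation_bind[OF finp finf]) simp
    also have "\<dots> \<le> (\<Sum>a\<in>set_pmf p. pmf p a *\<^sub>R \<Phi> a)"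
      proof (intro sum_mono)
      fix a assume "a \<in> set_pmf p"
      have "measure_pmf.expectation (f a) \<Phi> \<le> \<Phi> a" unfolding f_def by (rule step)
      then show "pmf p a *\<^sub>R measure_pmf.expectation (f a) \<Phi> \<le> pmf p a *\<^sub>R \<Phi> a"
        by (simp add: mult_left_mono)
    qed
    also have "\<dots> = measure_pmf.expectation p \<Phi>"
      by (rule integral_measure_pmf[OF finp, symmetric]) simp
    also have "\<dots> \<le> \<Phi> x0" using Suc p_def by simp
    finally show ?case using eq finb by simp
  qed
  have Vnn: "\<And>y. Var I y \<ge> 0" unfolding Var_def by (intro divide_nonneg_nonneg sum_nonneg) auto
  have "measure_pmf.expectation (bga_dist I W q x0 t) (\<lambda>x. (avg I x - avg I x0)^2)
      \<le> measure_pmf.expectation (bga_dist I W q x0 t) \<Phi>"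
    using IH by (intro integral_mono integrable_measure_pmf_finite)
       (auto simp: \<Phi>_def c_def intro!: mult_nonneg_nonneg al0 Vnn)
  also have "\<dots> \<le> \<Phi> x0" using IH by simp
  also have "\<Phi> x0 = al * Var I x0" unfolding \<Phi>_def c_def by simp
  finally show ?thesis unfolding al_def Dm_def N_def .
qed

end
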